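(* Let $m,r,\delta\ge 1$, $n=m(r+1)$, let $q$ be a prime power, $\alpha$ a primitive element of $\mathbb{F}_q$, and $\beta\in\mathbb{F}_q$ an element of multiplicative order $\psi$ with $\psi\ge r+1$ (so $\psi\mid q-1$), and assume $q-1\ge \psi m$. Let $H_0$ be the $\delta\times(r+1)$ matrix with $(a,b)$ entry $\beta^{ab}$ for $0\le a\le\delta-1$, $0\le b\le r$, and for $j=1,\dots,m$ let $H_j$ be the $2\times(r+1)$ matrix whose first row is $(1,\beta^{\delta},\beta^{2\delta},\dots,\beta^{r\delta})$ and whose second row is $(\alpha^{j-1},\alpha^{j-1}\beta^{-1},\alpha^{j-1}\beta^{-2},\dots,\alpha^{j-1}\beta^{-r})$. Let $\mathcal{C}$ be the code of length $n$ with parity-check matrix $$H=\begin{pmatrix} H_0&0&\cdots&0\\ 0&H_0&\cdots&0\\ \vdots&&\ddots&\vdots\\ 0&0&\cdots&H_0\\ H_1&H_2&\cdots&H_m\end{pmatrix}.$$ Then $\mathcal{C}$ is a maximally recoverable (partial MDS) code: it corrects every erasure pattern consisting of $\delta$ erasures in each of the $m$ local groups (the blocks of $r+1$ consecutive coordinates) together with $2$ additional erasures at arbitrary further positions. *)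

theory Defs
  imports Main
begin

definition mult_order :: "'a::{finite,field} \<Rightarrow> nat" where
  "mult_order x = (LEAST k. 0 < k \<and> x ^ k = 1)"

definition primitive_elem :: "'a::{finite,field} \<Rightarrow> bool" where
  "primitive_elem x \<longleftrightarrow> x \<noteq> 0 \<and> mult_order x = card (UNIV :: 'a set) - 1"

text \<open>The parity-check matrix H, rows 0..m*delta+1, columns 0..m*(r+1)-1.
  Column j lies in local group g = j div (r+1) (group g corresponds to H_(g+1)),
  with in-group index b = j mod (r+1).  Rows g*delta + a (a < delta) form the
  g-th copy of H_0; row m*delta is the first row of the H_j's, row m*delta+1 the
  second row.\<close>
definition pmds_H :: "'a::field \<Rightarrow> 'a \<Rightarrow> nat \<Rightarrow> nat \<Rightarrow> nat \<Rightarrow> nat \<Rightarrow> nat \<Rightarrow> 'a" where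
  "pmds_H \<alpha> \<beta> m r \<delta> i j =
     (if i < m * \<delta> then
        (if j div (r + 1) = i div \<delta> then \<beta> ^ ((i mod \<delta>) * (j mod (r + 1))) else 0)
      else if i = m * \<delta> then \<beta> ^ (\<delta> * (j mod (r + 1)))
      else \<alpha> ^ (j div (r + 1)) * (inverse \<beta>) ^ (j mod (r + 1)))"

definition pmds_code :: "'a::field \<Rightarrow> 'a \<Rightarrow> nat \<Rightarrow> nat \<Rightarrow> nat \<Rightarrow> (nat \<Rightarrow> 'a) set" where
  "pmds_code \<alpha> \<beta> m r \<delta> =
     {c. (\<forall>i\<ge>m * (r + 1). c i = 0) \<and>
         (\<forall>i < m * \<delta> + 2. (\<Sum>j < m * (r + 1). pmds_H \<alpha> \<beta> m r \<delta> i j * c j) = 0)}"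

definition corrects_erasures :: "(nat \<Rightarrow> 'a) set \<Rightarrow> nat set \<Rightarrow> bool" where
  "corrects_erasures C E \<longleftrightarrow>
     (\<forall>c\<in>C. \<forall>d\<in>C. (\<forall>i. i \<notin> E \<longrightarrow> c i = d i) \<longrightarrow> c = d)"

end

theory Submission imports Defs "HOL-Computational_Algebra.Polynomial" begin
lemma poly_comb:
  fixes z x :: "'b \<Rightarrow> 'a::field"
  shows "(\<Sum>b\<in>S. poly p (z b) * x b) = (\<Sum>k\<le>degree p. coeff p k * (\<Sum>b\<in>S. z b ^ k * x b))"
  by (simp add: poly_altdef sum_distrib_left sum_distrib_right mult.assoc sum.swap[of _ S])

lemma linprod_facts:
  fixes z :: "'b \<Rightarrow> 'a::field"
  assumes "finite T"
  shows "degree (\<Prod>b\<in>T. [:- z b, 1:]) = card T"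
    and "lead_coeff (\<Prod>b\<in>T. [:- z b, 1:]) = 1"
    and "poly (\<Prod>b\<in>T. [:- z b, 1:]) t = (\<Prod>b\<in>T. t - z b)"
proof -
  show d: "degree (\<Prod>b\<in>T. [:- z b, 1:]) = card T"
    using assms by (auto simp: degree_prod_eq_sum_degree)
  show "lead_coeff (\<Prod>b\<in>T. [:- z b, 1:]) = 1"
    using lead_coeff_prod[of "\<lambda>b. [:- z b, 1:]" T] by simp
  show "poly (\<Prod>b\<in>T. [:- z b, 1:]) t = (\<Prod>b\<in>T. t - z b)"
    by (simp add: poly_prod)
qed

lemma vand:
  fixes z x :: "'b \<Rightarrow> 'a::field"
  assumes fin: "finite S" and inj: "inj_on z S"
    and eq: "\<And>a. a < card S \<Longrightarrow> (\<Sum>b\<in>S. z b ^ a * x b) = 0"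
    and b0: "b0 \<in> S"
  shows "x b0 = 0"
proof -
  define L where "L = (\<Prod>b\<in>S - {b0}. [:- z b, 1:])"
  have dL: "degree L = card S - 1" unfolding L_def using fin b0
    by (simp add: linprod_facts)
  have cpos: "card S > 0" using fin b0 by (auto simp: card_gt_0_iff)
  have "(\<Sum>b\<in>S. poly L (z b) * x b) = 0"
    unfolding poly_comb
    by (rule sum.neutral) (use dL eq cpos in \<open>auto\<close>)
  moreover have "(\<Sum>b\<in>S. poly L (z b) * x b) = poly L (z b0) * x b0"
  proof (rule sum.remove[OF fin b0, THEN trans])
    have "(\<Sum>b\<in>S - {b0}. poly L (z b) * x b) = 0"
      by (rule sum.neutral) (use fin in \<open>auto simp: L_def linprod_facts\<close>)
    then show "poly L (z b0) * x b0 + (\<Sum>b\<in>S - {b0}. poly L (z b) * x b) = poly L (z b0) * x b0" by simp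
  qed
  moreover have "poly L (z b0) \<noteq> 0"
    using fin b0 inj by (auto simp: L_def linprod_facts inj_on_def)
  ultimately show ?thesis by simp
qed

lemma key:
  fixes z x :: "'b \<Rightarrow> 'a::field"
  assumes fin: "finite S" and nz: "\<And>b. b \<in> S \<Longrightarrow> z b \<noteq> 0"
    and cS: "card S = Suc d"
    and eq: "\<And>a. a < d \<Longrightarrow> (\<Sum>b\<in>S. z b ^ a * x b) = 0"
  shows "(\<Sum>b\<in>S. z b ^ d * x b) = - (\<Prod>b\<in>S. - z b) * (\<Sum>b\<in>S. inverse (z b) * x b)"
proof -
  define Q where "Q = (\<Prod>b\<in>S. [:- z b, 1:])"
  have dQ: "degree Q = Suc d" and lQ: "coeff Q (Suc d) = 1"
    using linprod_facts[OF fin, of z] cS by (auto simp: Q_def)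
  have Q0: "coeff Q 0 = (\<Prod>b\<in>S. - z b)"
    using linprod_facts(3)[OF fin, of z 0] by (simp add: Q_def poly_0_coeff_0)
  have pt: "- coeff Q 0 * inverse (z b) = (\<Sum>k<Suc d. coeff Q (Suc k) * z b ^ k)" if b: "b \<in> S" for b
  proof -
    have "poly Q (z b) = 0" using fin b by (auto simp: Q_def linprod_facts intro!: bexI[of _ b])
    then have "0 = (\<Sum>i\<le>Suc d. coeff Q i * z b ^ i)" by (simp add: poly_altdef dQ)
    also have "\<dots> = coeff Q 0 + (\<Sum>k<Suc d. coeff Q (Suc k) * z b ^ Suc k)"
      unfolding sum.atMost_Suc_shift lessThan_Suc_atMost by simp
    moreover have "(\<Sum>k<Suc d. coeff Q (Suc k) * z b ^ Suc k) = (\<Sum>k<Suc d. coeff Q (Suc k) * z b ^ k) * z b"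
      unfolding sum_distrib_right by (rule sum.cong) (auto simp: mult_ac)
    ultimately have "- coeff Q 0 = (\<Sum>k<Suc d. coeff Q (Suc k) * z b ^ k) * z b"
      by (metis add.commute add_eq_0_iff)
    then show ?thesis using nz[OF b] by (simp add: field_simps)
  qed
  have "- (\<Prod>b\<in>S. - z b) * (\<Sum>b\<in>S. inverse (z b) * x b)
      = (\<Sum>b\<in>S. (- coeff Q 0 * inverse (z b)) * x b)"
    by (simp add: Q0 sum_distrib_left mult.assoc)
  also have "\<dots> = (\<Sum>b\<in>S. (\<Sum>k<Suc d. coeff Q (Suc k) * z b ^ k) * x b)"
    by (rule sum.cong) (auto simp only: pt)
  also have "\<dots> = (\<Sum>k<Suc d. coeff Q (Suc k) * (\<Sum>b\<in>S. z b ^ k * x b))"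
    unfolding sum_distrib_left sum_distrib_right by (subst sum.swap) (simp add: mult.assoc)
  also have "\<dots> = coeff Q (Suc d) * (\<Sum>b\<in>S. z b ^ d * x b)"
    by (simp add: eq)
  finally show ?thesis using lQ by simp
qed

lemma excess2:
  fixes e :: "nat \<Rightarrow> nat"
  assumes "(\<Sum>g<m. e g) = 2"
  shows "(\<exists>g<m. e g = 2 \<and> (\<forall>g'<m. g' \<noteq> g \<longrightarrow> e g' = 0)) \<or>
         (\<exists>g<m. \<exists>h<m. g \<noteq> h \<and> e g = 1 \<and> e h = 1 \<and> (\<forall>g'<m. g' \<noteq> g \<and> g' \<noteq> h \<longrightarrow> e g' = 0))"
proof -
  obtain g where g: "g < m" "e g > 0"
    using assms by (metis gr0I sum.neutral lessThan_iff zero_neq_numeral)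
  have s1: "e g + (\<Sum>g'\<in>{..<m} - {g}. e g') = 2"
    using assms sum.remove[of "{..<m}" g e] g by simp
  show ?thesis
  proof (cases "e g \<ge> 2")
    case True
    then have z: "(\<Sum>g'\<in>{..<m} - {g}. e g') = 0" "e g = 2" using s1 by linarith+
    then have "\<forall>g'\<in>{..<m} - {g}. e g' = 0" by simp
    then show ?thesis using g z by auto
  next
    case False
    then have eg: "e g = 1" using g by auto
    then have s2: "(\<Sum>g'\<in>{..<m} - {g}. e g') = 1" using s1 by simp
    then obtain h where h: "h \<in> {..<m} - {g}" "e h > 0"
      by (metis gr0I sum.neutral zero_neq_one)
    have "e h + (\<Sum>g'\<in>({..<m} - {g}) - {h}. e g') = 1"
      using s2 sum.remove[of "{..<m} - {g}" h e] h by simp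
    then have z: "e h = 1" "(\<Sum>g'\<in>({..<m} - {g}) - {h}. e g') = 0" using h(2) by linarith+
    then have "\<forall>g'\<in>({..<m} - {g}) - {h}. e g' = 0" by simp
    then have "\<exists>g<m. \<exists>h<m. g \<noteq> h \<and> e g = 1 \<and> e h = 1 \<and> (\<forall>g'<m. g' \<noteq> g \<and> g' \<noteq> h \<longrightarrow> e g' = 0)"
      using g h eg z by (intro exI[of _ g] conjI exI[of _ h]) auto
    then show ?thesis by blast
  qed
qed

lemma order_facts:
  fixes x :: "'a::{finite,field}"
  assumes "x \<noteq> 0"
  shows "0 < mult_order x \<and> x ^ mult_order x = 1"
proof -
  have "\<not> inj (\<lambda>n::nat. x ^ n)"
  proof
    assume "inj (\<lambda>n::nat. x ^ n)"
    then have "finite (UNIV :: nat set)"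
      using finite_imageD[of "\<lambda>n::nat. x ^ n" UNIV] by auto
    then show False by simp
  qed
  then obtain i j :: nat where ij: "i \<noteq> j" "x ^ i = x ^ j" unfolding inj_def by blast
  have "\<exists>k. 0 < k \<and> x ^ k = 1"
  proof (cases "i < j")
    case True
    have "x ^ i * x ^ (j - i) = x ^ j" using True by (simp flip: power_add)
    then have "x ^ i * x ^ (j - i) = x ^ i * 1" using ij by simp
    then show ?thesis using True assms by (intro exI[of _ "j - i"]) auto
  next
    case False
    then have "j < i" using ij by auto
    have "x ^ j * x ^ (i - j) = x ^ i" using \<open>j < i\<close> by (simp flip: power_add)
    then have "x ^ j * x ^ (i - j) = x ^ j * 1" using ij by simp
    then show ?thesis using \<open>j < i\<close> assms by (intro exI[of _ "i - j"]) auto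
  qed
  then show ?thesis unfolding mult_order_def by (metis (mono_tags, lifting) LeastI)
qed

lemma order_min:
  fixes x :: "'a::{finite,field}"
  assumes "0 < k" "k < mult_order x"
  shows "x ^ k \<noteq> 1"
  using not_less_Least[of k "\<lambda>k. 0 < k \<and> x ^ k = 1"] assms unfolding mult_order_def by auto

lemma pow_inj:
  fixes x :: "'a::{finite,field}"
  assumes "x \<noteq> 0" "u < mult_order x" "v < mult_order x" "x ^ u = x ^ v"
  shows "u = v"
proof (rule ccontr)
  assume "u \<noteq> v"
  then consider "u < v" | "v < u" by linarith
  then show False
  proof cases
    case 1
    have "x ^ u * x ^ (v - u) = x ^ v" using 1 by (simp flip: power_add)
    then have "x ^ u * x ^ (v - u) = x ^ u * 1" using assms by simp
    then have "x ^ (v - u) = 1" using assms by simp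
    then show False using order_min[of "v - u" x] 1 assms by auto
  next
    case 2
    have "x ^ v * x ^ (u - v) = x ^ u" using 2 by (simp flip: power_add)
    then have "x ^ v * x ^ (u - v) = x ^ v * 1" using assms by simp
    then have "x ^ (u - v) = 1" using assms by simp
    then show False using order_min[of "u - v" x] 2 assms by auto
  qed
qed

lemma grp_iff:
  fixes j g k :: nat
  assumes "k > 0"
  shows "j \<in> {g * k..<(g + 1) * k} \<longleftrightarrow> j div k = g"
proof
  assume "j \<in> {g * k..<(g + 1) * k}"
  then show "j div k = g" using assms by (intro div_nat_eqI) (auto simp: mult.commute)
next
  assume h: "j div k = g"
  have "j = g * k + j mod k" using h div_mult_mod_eq[of j k] by simp
  moreover have "j mod k < k" using assms by simp
  ultimately show "j \<in> {g * k..<(g + 1) * k}" by (metis atLeastLessThan_iff add_mult_distrib mult_1 le_add1 nat_add_left_cancel_less)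
qed

lemma rows:
  fixes \<alpha> \<beta> :: "'a::field" and c :: "nat \<Rightarrow> 'a"
  assumes c: "c \<in> pmds_code \<alpha> \<beta> m r \<delta>" and cE: "\<And>j. j \<notin> E \<Longrightarrow> c j = 0"
    and E: "E \<subseteq> {..<m * (r + 1)}" and d: "\<delta> \<ge> 1"
  shows "\<And>g a. g < m \<Longrightarrow> a < \<delta> \<Longrightarrow>
           (\<Sum>j\<in>{j\<in>E. j div (r+1) = g}. (\<beta> ^ (j mod (r+1))) ^ a * c j) = 0"
    and "(\<Sum>j\<in>E. (\<beta> ^ (j mod (r+1))) ^ \<delta> * c j) = 0"
    and "(\<Sum>j\<in>E. \<alpha> ^ (j div (r+1)) * (inverse (\<beta> ^ (j mod (r+1))) * c j)) = 0"
proof -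
  have fE: "finite E" using E finite_subset by blast
  have rowc: "\<And>i. i < m * \<delta> + 2 \<Longrightarrow> (\<Sum>j < m * (r + 1). pmds_H \<alpha> \<beta> m r \<delta> i j * c j) = 0"
    using c by (simp add: pmds_code_def)
  fix g a assume g: "g < m" and a: "a < \<delta>"
  define i where "i = g * \<delta> + a"
  have ilt: "i < m * \<delta>"
  proof -
    have "g * \<delta> + a < g * \<delta> + \<delta>" using a by simp
    also have "\<dots> = Suc g * \<delta>" by simp
    also have "\<dots> \<le> m * \<delta>" using g by (intro mult_right_mono) auto
    finally show ?thesis unfolding i_def .
  qed
  have idiv: "i div \<delta> = g" "i mod \<delta> = a" using a by (auto simp: i_def)
  have "(\<Sum>j < m * (r + 1). pmds_H \<alpha> \<beta> m r \<delta> i j * c j)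
       = (\<Sum>j\<in>{j\<in>E. j div (r+1) = g}. (\<beta> ^ (j mod (r+1))) ^ a * c j)"
    by (rule sum.mono_neutral_cong_right)
       (use E cE ilt idiv in \<open>auto simp: pmds_H_def power_mult mult.commute[of a]\<close>)
  then show "(\<Sum>j\<in>{j\<in>E. j div (r+1) = g}. (\<beta> ^ (j mod (r+1))) ^ a * c j) = 0"
    using rowc[of i] ilt by simp
next
  have rowc: "\<And>i. i < m * \<delta> + 2 \<Longrightarrow> (\<Sum>j < m * (r + 1). pmds_H \<alpha> \<beta> m r \<delta> i j * c j) = 0"
    using c by (simp add: pmds_code_def)
  have "(\<Sum>j < m * (r + 1). pmds_H \<alpha> \<beta> m r \<delta> (m * \<delta>) j * c j)
       = (\<Sum>j\<in>E. (\<beta> ^ (j mod (r+1))) ^ \<delta> * c j)"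
    by (rule sum.mono_neutral_cong_right)
       (use E cE in \<open>auto simp: pmds_H_def power_mult mult.commute[of \<delta>]\<close>)
  then show "(\<Sum>j\<in>E. (\<beta> ^ (j mod (r+1))) ^ \<delta> * c j) = 0"
    using rowc[of "m * \<delta>"] by simp
next
  have rowc: "\<And>i. i < m * \<delta> + 2 \<Longrightarrow> (\<Sum>j < m * (r + 1). pmds_H \<alpha> \<beta> m r \<delta> i j * c j) = 0"
    using c by (simp add: pmds_code_def)
  have "(\<Sum>j < m * (r + 1). pmds_H \<alpha> \<beta> m r \<delta> (m * \<delta> + 1) j * c j)
       = (\<Sum>j\<in>E. \<alpha> ^ (j div (r+1)) * (inverse (\<beta> ^ (j mod (r+1))) * c j))"
    by (rule sum.mono_neutral_cong_right)
       (use E cE in \<open>auto simp: pmds_H_def power_inverse mult.assoc\<close>)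
  then show "(\<Sum>j\<in>E. \<alpha> ^ (j div (r+1)) * (inverse (\<beta> ^ (j mod (r+1))) * c j)) = 0"
    using rowc[of "m * \<delta> + 1"] by simp
qed


lemma alpha_sep:
  fixes \<alpha> :: "'a::{finite,field}"
  assumes "\<alpha> \<noteq> 0" "mult_order \<alpha> \<ge> \<psi> * m" "0 < \<psi>" "g < h" "h < m"
  shows "\<alpha> ^ (h * \<psi>) \<noteq> \<alpha> ^ (g * \<psi>)"
proof
  assume eq: "\<alpha> ^ (h * \<psi>) = \<alpha> ^ (g * \<psi>)"
  have "h * \<psi> = g * \<psi> + (h - g) * \<psi>" using assms by (simp add: diff_mult_distrib)
  then have "\<alpha> ^ (g * \<psi>) * \<alpha> ^ ((h - g) * \<psi>) = \<alpha> ^ (g * \<psi>) * 1"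
    using eq by (simp flip: power_add)
  then have one: "\<alpha> ^ ((h - g) * \<psi>) = 1" using assms by simp
  have "(h - g) * \<psi> < m * \<psi>" using assms by simp
  then have "(h - g) * \<psi> < mult_order \<alpha>" using assms(2) by (metis mult.commute order_less_le_trans)
  moreover have "0 < (h - g) * \<psi>" using assms by simp
  ultimately show False using order_min one by blast
qed

lemma zero_main:
  fixes \<alpha> \<beta> :: "'a::{finite,field}"
    and m r \<delta> \<psi> :: nat
    and E :: "nat set" and c :: "nat \<Rightarrow> 'a"
  assumes "m \<ge> 1" and "r \<ge> 1" and d1: "\<delta> \<ge> 1"
    and prim: "primitive_elem \<alpha>"
    and bnz: "\<beta> \<noteq> 0" and ord: "mult_order \<beta> = \<psi>" and psi: "\<psi> \<ge> r + 1"
    and qbig: "card (UNIV :: 'a set) - 1 \<ge> \<psi> * m"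
    and E: "E \<subseteq> {..<m * (r + 1)}"
    and cardE: "card E = m * \<delta> + 2"
    and grpcard: "\<forall>g<m. card (E \<inter> {g * (r + 1)..<(g + 1) * (r + 1)}) \<ge> \<delta>"
    and c: "c \<in> pmds_code \<alpha> \<beta> m r \<delta>" and cE: "\<And>j. j \<notin> E \<Longrightarrow> c j = 0"
  shows "c j = 0"
proof -
  define z where "z j = \<beta> ^ (j mod (r+1))" for j
  define D where "D g = {j\<in>E. j div (r+1) = g}" for g
  have fE: "finite E" using E finite_subset by blast
  have fD: "finite (D g)" for g using fE by (simp add: D_def)
  have anz: "\<alpha> \<noteq> 0" and aord: "mult_order \<alpha> \<ge> \<psi> * m"
    using prim qbig by (auto simp: primitive_elem_def)
  have psipos: "0 < \<psi>" and bpsi: "\<beta> ^ \<psi> = 1" using order_facts[OF bnz] ord by auto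
  have znz: "z j \<noteq> 0" for j using bnz by (simp add: z_def)
  have zinj: "inj_on z (D g)" for g
  proof
    fix j j' assume jj: "j \<in> D g" "j' \<in> D g" "z j = z j'"
    have "j mod (r+1) < r + 1" "j' mod (r+1) < r + 1" by simp_all
    then have "j mod (r+1) < mult_order \<beta>" "j' mod (r+1) < mult_order \<beta>"
      using psi ord by linarith+
    then have "j mod (r+1) = j' mod (r+1)" using pow_inj[OF bnz] jj by (auto simp: z_def)
    moreover have "j div (r+1) = j' div (r+1)" using jj by (auto simp: D_def)
    ultimately show "j = j'" by (metis div_mult_mod_eq)
  qed
  have L: "\<And>g a. g < m \<Longrightarrow> a < \<delta> \<Longrightarrow> (\<Sum>j\<in>D g. z j ^ a * c j) = 0"
    using rows(1)[OF c cE E d1] unfolding D_def z_def by blast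
  have G1: "(\<Sum>j\<in>E. z j ^ \<delta> * c j) = 0"
    using rows(2)[OF c cE E d1] unfolding z_def by blast
  have G2: "(\<Sum>j\<in>E. \<alpha> ^ (j div (r+1)) * (inverse (z j) * c j)) = 0"
    using rows(3)[OF c cE E d1] unfolding z_def by blast
  have small: "c j = 0" if "g < m" "card (D g) = \<delta>" "j \<in> D g" for g j
    using vand[OF fD zinj, of g c j] L that by auto
  have DE: "D g \<subseteq> E" for g by (auto simp: D_def)
  have jm: "j div (r+1) < m" if "j \<in> E" for j
    using that E by (auto simp: less_mult_imp_div_less mult.commute)
  have jD: "j \<in> D (j div (r+1))" if "j \<in> E" for j using that by (simp add: D_def)
  have Dint: "D g = E \<inter> {g * (r + 1)..<(g + 1) * (r + 1)}" for g
    using grp_iff[of "r+1"] by (auto simp: D_def)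
  have cardD: "card (D g) \<ge> \<delta>" if "g < m" for g using grpcard that Dint by auto
  have Eun: "E = (\<Union>g<m. D g)" using jm jD DE by blast
  have "card E = (\<Sum>g<m. card (D g))"
    unfolding Eun by (rule card_UN_disjoint) (use fD in \<open>auto simp: D_def\<close>)
  then have sumD: "(\<Sum>g<m. card (D g)) = m * \<delta> + 2" using cardE by simp
  have "(\<Sum>g<m. card (D g) - \<delta>) = (\<Sum>g<m. card (D g)) - (\<Sum>g<m. \<delta>)"
    by (rule sum_subtractf_nat) (use cardD in auto)
  then have e2: "(\<Sum>g<m. card (D g) - \<delta>) = 2" using sumD by simp
  have finB: "\<forall>j\<in>D g. c j = 0"
    if g: "g < m" "card (D g) = Suc \<delta>" and B: "(\<Sum>j\<in>D g. inverse (z j) * c j) = 0"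
    and A: "(\<Sum>j\<in>D g. z j ^ \<delta> * c j) = 0 \<or> True" for g
  proof -
    have "(\<Sum>j\<in>D g. z j ^ \<delta> * c j) = - (\<Prod>j\<in>D g. - z j) * (\<Sum>j\<in>D g. inverse (z j) * c j)"
      by (rule key[OF fD]) (use znz g L in auto)
    then have A0: "(\<Sum>j\<in>D g. z j ^ \<delta> * c j) = 0" using B by simp
    have "\<And>a. a < card (D g) \<Longrightarrow> (\<Sum>j\<in>D g. z j ^ a * c j) = 0"
    proof -
      fix a assume "a < card (D g)"
      then have "a < \<delta> \<or> a = \<delta>" using g by auto
      then show "(\<Sum>j\<in>D g. z j ^ a * c j) = 0" using A0 L g by auto
    qed
    then show ?thesis using vand[OF fD zinj, of g c] by blast
  qed
  have allzero: "\<forall>g<m. \<forall>j\<in>D g. c j = 0"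
  proof -
    from excess2[OF e2] show ?thesis
    proof
      assume "\<exists>g<m. card (D g) - \<delta> = 2 \<and> (\<forall>g'<m. g' \<noteq> g \<longrightarrow> card (D g') - \<delta> = 0)"
      then obtain g0 where g0m: "g0 < m" and e0: "card (D g0) - \<delta> = 2"
        and eo: "\<forall>g'<m. g' \<noteq> g0 \<longrightarrow> card (D g') - \<delta> = 0" by blast
      have g0: "g0 < m" "card (D g0) = Suc (Suc \<delta>)" using g0m e0 cardD[OF g0m] by linarith+
      have oth: "card (D g') = \<delta>" if "g' < m" "g' \<noteq> g0" for g'
      proof -
        have "card (D g') - \<delta> = 0" "card (D g') \<ge> \<delta>" using eo cardD that by auto
        then show ?thesis by linarith
      qed
      have oz: "c j = 0" if "j \<in> E - D g0" for j
        using small[of "j div (r+1)" j] oth[of "j div (r+1)"] jm jD that by auto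
      have G1': "(\<Sum>j\<in>D g0. z j ^ \<delta> * c j) = 0"
        using G1 sum.mono_neutral_right[OF fE DE[of g0], of "\<lambda>j. z j ^ \<delta> * c j"] oz by simp
      have "(\<Sum>j\<in>D g0. \<alpha> ^ (j div (r+1)) * (inverse (z j) * c j)) = 0"
        using G2 sum.mono_neutral_right[OF fE DE[of g0], of "\<lambda>j. \<alpha> ^ (j div (r+1)) * (inverse (z j) * c j)"] oz by simp
      also have "(\<Sum>j\<in>D g0. \<alpha> ^ (j div (r+1)) * (inverse (z j) * c j)) = \<alpha> ^ g0 * (\<Sum>j\<in>D g0. inverse (z j) * c j)"
        unfolding sum_distrib_left by (rule sum.cong) (auto simp: D_def)
      finally have G2': "(\<Sum>j\<in>D g0. inverse (z j) * c j) = 0" using anz by simp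
      have vy: "(\<Sum>j\<in>D g0. z j ^ a * (inverse (z j) * c j)) = 0" if "a < card (D g0)" for a
      proof (cases a)
        case 0 then show ?thesis using G2' by simp
      next
        case (Suc a')
        have "(\<Sum>j\<in>D g0. z j ^ a * (inverse (z j) * c j)) = (\<Sum>j\<in>D g0. z j ^ a' * c j)"
          by (rule sum.cong) (use znz Suc in \<open>auto simp: field_simps\<close>)
        moreover have "a' < \<delta> \<or> a' = \<delta>" using that g0 Suc by auto
        ultimately show ?thesis using L g0 G1' by auto
      qed
      have "\<forall>j\<in>D g0. c j = 0"
      proof
        fix j assume "j \<in> D g0"
        then have "inverse (z j) * c j = 0" using vand[OF fD zinj, of g0 "\<lambda>j. inverse (z j) * c j"] vy by blast
        then show "c j = 0" using znz by simp
      qed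
      then show ?thesis using oth small by blast
    next
      assume "\<exists>g<m. \<exists>h<m. g \<noteq> h \<and> card (D g) - \<delta> = 1 \<and> card (D h) - \<delta> = 1 \<and>
               (\<forall>g'<m. g' \<noteq> g \<and> g' \<noteq> h \<longrightarrow> card (D g') - \<delta> = 0)"
      then obtain g0 h0 where ghm: "g0 < m" "h0 < m" "g0 \<noteq> h0"
        and eg: "card (D g0) - \<delta> = 1" and eh: "card (D h0) - \<delta> = 1"
        and eo: "\<forall>g'<m. g' \<noteq> g0 \<and> g' \<noteq> h0 \<longrightarrow> card (D g') - \<delta> = 0" by blast
      have gh: "g0 < m" "h0 < m" "g0 \<noteq> h0" "card (D g0) = Suc \<delta>" "card (D h0) = Suc \<delta>"
        using ghm eg eh cardD[of g0] cardD[of h0] by linarith+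
      have oth: "card (D g') = \<delta>" if "g' < m" "g' \<noteq> g0" "g' \<noteq> h0" for g'
      proof -
        have "card (D g') - \<delta> = 0" "card (D g') \<ge> \<delta>" using eo cardD that by auto
        then show ?thesis by linarith
      qed
      have disj: "D g0 \<inter> D h0 = {}" using gh by (auto simp: D_def)
      have sub: "D g0 \<union> D h0 \<subseteq> E" using DE by auto
      have oz: "c j = 0" if "j \<in> E - (D g0 \<union> D h0)" for j
        using small[of "j div (r+1)" j] oth[of "j div (r+1)"] jm jD that by auto
      define Ag where "Ag = (\<Sum>j\<in>D g0. z j ^ \<delta> * c j)"
      define Ah where "Ah = (\<Sum>j\<in>D h0. z j ^ \<delta> * c j)"
      define Bg where "Bg = (\<Sum>j\<in>D g0. inverse (z j) * c j)"
      define Bh where "Bh = (\<Sum>j\<in>D h0. inverse (z j) * c j)"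
      define Kg where "Kg = - (\<Prod>j\<in>D g0. - z j)"
      define Kh where "Kh = - (\<Prod>j\<in>D h0. - z j)"
      have "(\<Sum>j\<in>E. z j ^ \<delta> * c j) = (\<Sum>j\<in>D g0 \<union> D h0. z j ^ \<delta> * c j)"
        using sum.mono_neutral_right[OF fE sub, of "\<lambda>j. z j ^ \<delta> * c j"] oz by simp
      then have e1: "Ag + Ah = 0" using G1 sum.union_disjoint[OF fD fD disj, of "\<lambda>j. z j ^ \<delta> * c j"] by (simp add: Ag_def Ah_def)
      have "(\<Sum>j\<in>E. \<alpha> ^ (j div (r+1)) * (inverse (z j) * c j)) = (\<Sum>j\<in>D g0 \<union> D h0. \<alpha> ^ (j div (r+1)) * (inverse (z j) * c j))"
        using sum.mono_neutral_right[OF fE sub, of "\<lambda>j. \<alpha> ^ (j div (r+1)) * (inverse (z j) * c j)"] oz by simp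
      also have "\<dots> = (\<Sum>j\<in>D g0. \<alpha> ^ (j div (r+1)) * (inverse (z j) * c j)) + (\<Sum>j\<in>D h0. \<alpha> ^ (j div (r+1)) * (inverse (z j) * c j))"
        by (rule sum.union_disjoint[OF fD fD disj])
      also have "(\<Sum>j\<in>D g0. \<alpha> ^ (j div (r+1)) * (inverse (z j) * c j)) = \<alpha> ^ g0 * Bg"
        unfolding Bg_def sum_distrib_left by (rule sum.cong) (auto simp: D_def)
      also have "(\<Sum>j\<in>D h0. \<alpha> ^ (j div (r+1)) * (inverse (z j) * c j)) = \<alpha> ^ h0 * Bh"
        unfolding Bh_def sum_distrib_left by (rule sum.cong) (auto simp: D_def)
      finally have e2': "\<alpha> ^ g0 * Bg + \<alpha> ^ h0 * Bh = 0" using G2 by simp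
      have kg: "Ag = Kg * Bg" unfolding Ag_def Kg_def Bg_def
        by (rule key[OF fD]) (use znz gh L in auto)
      have kh: "Ah = Kh * Bh" unfolding Ah_def Kh_def Bh_def
        by (rule key[OF fD]) (use znz gh L in auto)
      define s :: 'a where "s = - ((-1) ^ Suc \<delta>)"
      have snz: "s \<noteq> 0" by (simp add: s_def)
      have Kg': "Kg = s * (\<Prod>j\<in>D g0. z j)" unfolding Kg_def s_def
        using prod_uminus[of z "D g0"] gh by simp
      have Kh': "Kh = s * (\<Prod>j\<in>D h0. z j)" unfolding Kh_def s_def
        using prod_uminus[of z "D h0"] gh by simp
      have P1: "(\<Prod>j\<in>D g. z j) ^ \<psi> = 1" for g
        unfolding prod_power_distrib z_def
        by (rule prod.neutral) (metis bpsi power_mult mult.commute power_one)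
      have det: "Kg * \<alpha> ^ h0 \<noteq> Kh * \<alpha> ^ g0"
      proof
        assume "Kg * \<alpha> ^ h0 = Kh * \<alpha> ^ g0"
        then have "(\<Prod>j\<in>D g0. z j) * \<alpha> ^ h0 = (\<Prod>j\<in>D h0. z j) * \<alpha> ^ g0"
          using snz by (simp add: Kg' Kh' mult.assoc)
        then have "((\<Prod>j\<in>D g0. z j) * \<alpha> ^ h0) ^ \<psi> = ((\<Prod>j\<in>D h0. z j) * \<alpha> ^ g0) ^ \<psi>" by simp
        then have "\<alpha> ^ (h0 * \<psi>) = \<alpha> ^ (g0 * \<psi>)"
          by (simp add: power_mult_distrib P1 power_mult)
        moreover have "g0 < h0 \<or> h0 < g0" using gh by auto
        ultimately show False using alpha_sep[OF anz aord psipos] gh by metis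
      qed
      have X: "Kg * Bg = - (Kh * Bh)" using e1 kg kh by (simp add: eq_neg_iff_add_eq_0)
      have Y: "\<alpha> ^ g0 * Bg = - (\<alpha> ^ h0 * Bh)" using e2' by (simp add: eq_neg_iff_add_eq_0)
      have "(Kg * \<alpha> ^ h0 - Kh * \<alpha> ^ g0) * Bg = \<alpha> ^ h0 * (Kg * Bg) - Kh * (\<alpha> ^ g0 * Bg)"
        by (simp add: algebra_simps)
      also have "\<dots> = 0" unfolding X Y by (simp add: algebra_simps)
      finally have "(Kg * \<alpha> ^ h0 - Kh * \<alpha> ^ g0) * Bg = 0" .
      then have Bg0: "Bg = 0" using det by simp
      have X': "Kh * Bh = - (Kg * Bg)" using X by simp
      have Y': "\<alpha> ^ h0 * Bh = - (\<alpha> ^ g0 * Bg)" using Y by simp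
      have "(Kg * \<alpha> ^ h0 - Kh * \<alpha> ^ g0) * Bh = Kg * (\<alpha> ^ h0 * Bh) - \<alpha> ^ g0 * (Kh * Bh)"
        by (simp add: algebra_simps)
      also have "\<dots> = 0" unfolding X' Y' by (simp add: algebra_simps)
      finally have "(Kg * \<alpha> ^ h0 - Kh * \<alpha> ^ g0) * Bh = 0" .
      then have Bh0: "Bh = 0" using det by simp
      have "\<forall>j\<in>D g0. c j = 0" using finB[of g0] gh Bg0 by (simp add: Bg_def)
      moreover have "\<forall>j\<in>D h0. c j = 0" using finB[of h0] gh Bh0 by (simp add: Bh_def)
      ultimately show ?thesis using oth small by blast
    qed
  qed
  show ?thesis
  proof (cases "j \<in> E")
    case True then show ?thesis using allzero jm jD by blast
  next
    case False then show ?thesis using cE by simp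
  qed
qed

theorem mainTheorem5:
  fixes \<alpha> \<beta> :: "'a::{finite,field}"
    and m r \<delta> \<psi> :: nat
    and E :: "nat set"
  assumes "m \<ge> 1" and "r \<ge> 1" and "\<delta> \<ge> 1"
    and "primitive_elem \<alpha>"
    and "\<beta> \<noteq> 0" and "mult_order \<beta> = \<psi>" and "\<psi> \<ge> r + 1"
    and "card (UNIV :: 'a set) - 1 \<ge> \<psi> * m"
    and "E \<subseteq> {..<m * (r + 1)}"
    and "card E = m * \<delta> + 2"
    and "\<forall>g<m. card (E \<inter> {g * (r + 1)..<(g + 1) * (r + 1)}) \<ge> \<delta>"
  shows "corrects_erasures (pmds_code \<alpha> \<beta> m r \<delta>) E"
  unfolding corrects_erasures_def
proof (intro ballI impI)
  fix c d assume c: "c \<in> pmds_code \<alpha> \<beta> m r \<delta>" and d: "d \<in> pmds_code \<alpha> \<beta> m r \<delta>"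
    and agree: "\<forall>i. i \<notin> E \<longrightarrow> c i = d i"
  define x where "x i = c i - d i" for i
  have x: "x \<in> pmds_code \<alpha> \<beta> m r \<delta>"
    using c d by (simp add: pmds_code_def x_def right_diff_distrib sum_subtractf)
  have xE: "\<And>j. j \<notin> E \<Longrightarrow> x j = 0" using agree by (simp add: x_def)
  have "\<And>j. x j = 0" using zero_main[OF assms x xE] by blast
  then show "c = d" by (auto simp: x_def)
qed

end
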